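(* Suppose there exists $r>0$ such that $\phi(x)>r$ for all $x>0$. For each integer $N\ge1$ let $V(N)$ denote the optimal value of the problem: minimize $Y_{N-1}^+$ over $d_0,\dots,d_{N-1}\ge0$ subject to $\sum_{k=0}^{N-1}\mathrm{BED}_O(d_k)\le c$. Then there exists a finite optimal number of fractions $N^*$, i.e. $\min_{N\in\{1,2,\dots\}}V(N)$ is attained at some finite $N^*$.
   Context: Model: Tumor parameters $\alpha_T>0$, $\beta_T>0$, $[\alpha/\beta]_T=\alpha_T/\beta_T$; organ-at-risk (OAR) parameter $[\alpha/\beta]_O>0$; sparing factor $0<\gamma<1$; OAR limit $c>0$. Define $\mathrm{BED}_T(d)=d\left(1+\frac{d}{[\alpha/\beta]_T}\right)$ and $\mathrm{BED}_O(d)=\gamma d\left(1+\frac{\gamma d}{[\alpha/\beta]_O}\right)$. Tumor growth between doses follows $\frac{1}{x}\frac{dx}{dt}=\phi(x)$, with $\phi:(0,\infty)\to\mathbb{R}$ continuous and non-increasing. Doses $d_0,\dots,d_{N-1}$ are delivered at times $0,1,\dots,N-1$. With $Y=\ln(\text{number of tumor cells})/\alpha_T$, let $F$ be the one-day growth map for $Y$ under the ODE. With initial cell number $X_0>0$ (fixed, independent of $N$) and $Y_0^-=\ln(X_0)/\alpha_T$: $Y_0^+=Y_0^--\mathrm{BED}_T(d_0)$, $Y_{i+1}^+=F(Y_i^+)-\mathrm{BED}_T(d_{i+1})$ for $i=0,\dots,N-2$. *)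

theory Defs
  imports "HOL-Analysis.Analysis"
begin

definition BED_T :: "real \<Rightarrow> real \<Rightarrow> real" where
  "BED_T abT d = d * (1 + d / abT)"

definition BED_O :: "real \<Rightarrow> real \<Rightarrow> real \<Rightarrow> real" where
  "BED_O gamma abO d = gamma * d * (1 + gamma * d / abO)"

definition growth_map :: "real \<Rightarrow> (real \<Rightarrow> real) \<Rightarrow> real \<Rightarrow> real" where
  "growth_map alphaT phi y =
     (THE z. \<exists>X. X 0 = exp (alphaT * y) \<and>
        (\<forall>t\<in>{0..1}. X t > 0 \<and>
           (X has_real_derivative (X t * phi (X t))) (at t within {0..1})) \<and>
        z = ln (X 1) / alphaT)"

fun Yplus :: "(real \<Rightarrow> real) \<Rightarrow> real \<Rightarrow> real \<Rightarrow> (nat \<Rightarrow> real) \<Rightarrow> nat \<Rightarrow> real" where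
  "Yplus F abT Y0 d 0 = Y0 - BED_T abT (d 0)"
| "Yplus F abT Y0 d (Suc i) = F (Yplus F abT Y0 d i) - BED_T abT (d (Suc i))"

definition optval :: "(real \<Rightarrow> real) \<Rightarrow> real \<Rightarrow> real \<Rightarrow> real \<Rightarrow> real \<Rightarrow> real \<Rightarrow> nat \<Rightarrow> real" where
  "optval F abT Y0 gamma abO c N =
     Inf {Yplus F abT Y0 d (N - 1) | d.
            (\<forall>k<N. d k \<ge> 0) \<and> (\<Sum>k<N. BED_O gamma abO (d k)) \<le> c}"

end

theory Submission
  imports Defs
begin

lemma mono_within:
  fixes f f' :: "real \<Rightarrow> real"
  assumes "a \<le> b"
    and der: "\<And>t. t \<in> {a..b} \<Longrightarrow> (f has_real_derivative f' t) (at t within {a..b})"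
    and nn: "\<And>t. t \<in> {a..b} \<Longrightarrow> f' t \<ge> 0"
  shows "f a \<le> f b"
proof (rule DERIV_nonneg_imp_increasing_open[OF assms(1)])
  fix x assume "a < x" "x < b"
  then show "\<exists>y. DERIV f x :> y \<and> y \<ge> 0"
    using der[of x] nn[of x] by (auto simp: at_within_Icc_at)
next
  show "continuous_on {a..b} f" using der by (rule DERIV_continuous_on)
qed

lemma sol_props:
  fixes alphaT r :: real and phi :: "real \<Rightarrow> real" and X :: "real \<Rightarrow> real"
  assumes "\<And>x. x > 0 \<Longrightarrow> phi x > r"
    and "\<forall>t\<in>{0..1}. X t > 0 \<and> (X has_real_derivative (X t * phi (X t))) (at t within {0..1})"
  shows "ln (X 1) - ln (X 0) \<ge> r"
    and "\<And>t. t \<in> {0..1} \<Longrightarrow> ((\<lambda>t. ln (X t)) has_real_derivative phi (X t)) (at t within {0..1})"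
proof -
  show d: "((\<lambda>t. ln (X t)) has_real_derivative phi (X t)) (at t within {0..1})" if "t \<in> {0..1}" for t
  proof -
    have "((\<lambda>t. ln (X t)) has_real_derivative (1 / X t) * (X t * phi (X t))) (at t within {0..1})"
      using assms(2) that by (auto intro!: derivative_eq_intros)
    moreover have "X t \<noteq> 0" using assms(2) that by (metis less_irrefl)
    ultimately show ?thesis by simp
  qed
  have "(\<lambda>t. ln (X t) - r * t) 0 \<le> (\<lambda>t. ln (X t) - r * t) 1"
    apply (rule mono_within[where a=0 and b=1 and f="\<lambda>t. ln (X t) - r * t" and f'="\<lambda>t. phi (X t) - r"])
      apply simp
     apply (rule DERIV_diff[OF d], simp)
     apply (auto intro!: derivative_eq_intros)[1]
    using assms by (metis atLeastAtMost_iff diff_ge_0_iff_ge less_imp_le)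
  then show "ln (X 1) - ln (X 0) \<ge> r" by simp
qed

lemma sol_unique:
  fixes phi :: "real \<Rightarrow> real" and X Y :: "real \<Rightarrow> real"
  assumes mono: "\<And>x y. 0 < x \<Longrightarrow> x \<le> y \<Longrightarrow> phi y \<le> phi x"
    and "\<And>x. x > 0 \<Longrightarrow> phi x > r"
    and X: "\<forall>t\<in>{0..1}. X t > 0 \<and> (X has_real_derivative (X t * phi (X t))) (at t within {0..1})"
    and Y: "\<forall>t\<in>{0..1}. Y t > 0 \<and> (Y has_real_derivative (Y t * phi (Y t))) (at t within {0..1})"
    and "X 0 = Y 0"
  shows "X 1 = Y 1"
proof -
  define w where "w t = ln (X t) - ln (Y t)" for t
  have dw: "(w has_real_derivative phi (X t) - phi (Y t)) (at t within {0..1})" if "t \<in> {0..1}" for t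
    unfolding w_def using sol_props(2)[OF assms(2) X that] sol_props(2)[OF assms(2) Y that]
    by (rule DERIV_diff)
  have sg: "w t * (phi (X t) - phi (Y t)) \<le> 0" if "t \<in> {0..1}" for t
  proof (cases "X t \<le> Y t")
    case True
    then have "w t \<le> 0" using X Y that by (simp add: w_def)
    moreover have "phi (Y t) \<le> phi (X t)" using mono True X that by auto
    ultimately show ?thesis by (simp add: mult_nonpos_nonneg)
  next
    case False
    then have "w t \<ge> 0" using X Y that by (simp add: w_def)
    moreover have "phi (X t) \<le> phi (Y t)" using mono False Y that by auto
    ultimately show ?thesis by (simp add: mult_nonneg_nonpos)
  qed
  have "(\<lambda>t. -((w t)^2)) 0 \<le> (\<lambda>t. -((w t)^2)) 1"
    apply (rule mono_within[where a=0 and b=1 and f="\<lambda>t. -((w t)^2)" and f'="\<lambda>t. - (2 * w t * (phi (X t) - phi (Y t)))"])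
      apply simp
     apply (rule DERIV_minus)
     apply (rule DERIV_power[where n=2, THEN DERIV_cong, OF dw], simp, simp add: power2_eq_square)
    using sg by auto
  moreover have "w 0 = 0" using assms(5) by (simp add: w_def)
  ultimately have "w 1 = 0" by simp
  then show ?thesis using X Y by (simp add: w_def)
qed

lemma ode_exists:
  fixes h :: "real \<Rightarrow> real" and u0 r :: real
  assumes cont: "continuous_on UNIV h" and pos: "\<And>u. h u > r" and r: "r > 0"
    and anti: "\<And>u v. u \<le> v \<Longrightarrow> h v \<le> h u"
  shows "\<exists>U. U 0 = u0 \<and> (\<forall>t\<in>{0..1}. (U has_real_derivative h (U t)) (at t within {0..1}))"
proof -
  have hp: "h u > 0" for u using pos[of u] r by linarith
  define k where "k u = 1 / h u" for u
  have kc: "continuous_on UNIV k" unfolding k_def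
    by (intro continuous_intros cont) (metis hp less_irrefl)
  have kp: "k u > 0" for u using hp[of u] by (simp add: k_def)
  define A where "A = u0 - 1"
  define B where "B = u0 + h u0 + 2"
  define a1 where "a1 = u0 - 1/2"
  define b1 where "b1 = u0 + h u0 + 1"
  have order: "A < a1" "a1 < u0" "u0 < b1" "b1 < B" using hp[of u0]
    by (auto simp: A_def B_def a1_def b1_def)
  define G where "G x = integral {A..x} k" for x
  have dG: "DERIV G x :> k x" if "A < x" "x < B" for x
  proof -
    have "(G has_real_derivative k x) (at x within {A..B})"
      unfolding G_def
      by (rule integral_has_real_derivative) (use that kc in \<open>auto intro: continuous_on_subset\<close>)
    then show ?thesis using that by (simp add: at_within_Icc_at)
  qed
  have cG: "isCont G x" if "A < x" "x < B" for x using dG[OF that] by (rule DERIV_isCont)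
  have smono: "G x < G y" if "a1 \<le> x" "x < y" "y \<le> b1" for x y
  proof (rule DERIV_pos_imp_increasing[OF that(2)])
    fix z assume "x \<le> z" "z \<le> y"
    then have "A < z" "z < B" using order that by linarith+
    then show "\<exists>d. DERIV G z :> d \<and> d > 0" using dG kp by blast
  qed
  have gap: "G b1 - G u0 > 1"
  proof -
    have "(\<lambda>x. G x - x / h u0) u0 \<le> (\<lambda>x. G x - x / h u0) b1"
    proof (rule DERIV_nonneg_imp_nondecreasing[where f="\<lambda>x. G x - x / h u0"])
      show "u0 \<le> b1" using order by simp
      fix x assume x: "u0 \<le> x" "x \<le> b1"
      have "DERIV (\<lambda>x. G x - x / h u0) x :> k x - 1 / h u0"
        using x order by (intro DERIV_diff dG DERIV_cdivide[OF DERIV_ident, where c="h u0" and s=UNIV, simplified]) auto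
      moreover have "k x \<ge> 1 / h u0"
        unfolding k_def using anti[OF x(1)] hp[of x] hp[of u0] by (intro divide_left_mono) auto
      ultimately show "\<exists>y. DERIV (\<lambda>x. G x - x / h u0) x :> y \<and> y \<ge> 0" by force
    qed
    then have "G b1 - G u0 \<ge> (b1 - u0) / h u0" by (simp add: diff_divide_distrib)
    moreover have "(b1 - u0) / h u0 > 1" using hp[of u0] by (simp add: b1_def)
    ultimately show ?thesis by linarith
  qed
  define ginv where "ginv s = (THE x. a1 \<le> x \<and> x \<le> b1 \<and> G x = s)" for s
  have uniq: "x = y" if "a1 \<le> x" "x \<le> b1" "a1 \<le> y" "y \<le> b1" "G x = G y" for x y
    using smono[of x y] smono[of y x] that by (metis less_irrefl linorder_neqE_linordered_idom)
  have ginvG: "ginv (G x) = x" if "a1 \<le> x" "x \<le> b1" for x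
    unfolding ginv_def by (rule the_equality) (use that uniq in auto)
  have Gginv: "a1 \<le> ginv s \<and> ginv s \<le> b1 \<and> G (ginv s) = s" if "G a1 \<le> s" "s \<le> G b1" for s
  proof -
    have cc: "\<forall>x. a1 \<le> x \<and> x \<le> b1 \<longrightarrow> isCont G x"
      using order by (auto intro!: cG)
    have "a1 \<le> b1" using order by simp
    from IVT[OF that(1) that(2) this cc]
    obtain x where x: "a1 \<le> x" "x \<le> b1" "G x = s" by blast
    then show ?thesis using ginvG by auto
  qed
  have inner: "a1 < ginv s \<and> ginv s < b1" if "G a1 < s" "s < G b1" for s
  proof -
    have g: "a1 \<le> ginv s" "ginv s \<le> b1" "G (ginv s) = s" using Gginv[of s] that by auto
    have "ginv s \<noteq> a1" using g(3) that(1) by auto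
    moreover have "ginv s \<noteq> b1" using g(3) that(2) by auto
    ultimately show ?thesis using g by simp
  qed
  have dginv: "DERIV ginv s :> h (ginv s)" if s: "G a1 < s" "s < G b1" for s
  proof -
    let ?x = "ginv s"
    have ix: "a1 < ?x" "?x < b1" using inner[OF s] by auto
    have ic: "isCont ginv s"
    proof -
      have "isCont ginv (G ?x)"
      proof (rule isCont_inverse_function[where f=G and g=ginv and x="?x" and d="min (?x - a1) (b1 - ?x)"])
        show "0 < min (?x - a1) (b1 - ?x)" using ix by simp
        have zz: "a1 \<le> z \<and> z \<le> b1" if "\<bar>z - ?x\<bar> \<le> min (?x - a1) (b1 - ?x)" for z
          using that by auto
        show "ginv (G z) = z" if "\<bar>z - ?x\<bar> \<le> min (?x - a1) (b1 - ?x)" for z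
          using ginvG zz[OF that] by simp
        show "isCont G z" if "\<bar>z - ?x\<bar> \<le> min (?x - a1) (b1 - ?x)" for z
          using cG zz[OF that] order by simp
      qed
      then show ?thesis using Gginv[of s] s by simp
    qed
    have "DERIV ginv s :> inverse (k ?x)"
      apply (rule DERIV_inverse_function[where f=G and a="G a1" and b="G b1"])
      using dG[of ?x] ix order apply simp
      using kp[of ?x] apply simp
      using s apply simp
      using s apply simp
      using Gginv apply (simp add: less_imp_le)
      using ic by simp
    then show ?thesis by (simp add: k_def)
  qed
  define U where "U t = ginv (G u0 + t)" for t
  have "U 0 = u0" unfolding U_def using ginvG[of u0] order by simp
  moreover have "(U has_real_derivative h (U t)) (at t within {0..1})" if t: "t \<in> {0..1}" for t
  proof -
    have "G a1 < G u0" using smono[of a1 u0] order by simp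
    then have s: "G a1 < G u0 + t" "G u0 + t < G b1" using t gap by auto
    have "((\<lambda>t. ginv (G u0 + t)) has_real_derivative h (ginv (G u0 + t)) * 1) (at t within {0..1})"
      by (rule DERIV_chain2[where f=ginv and g="\<lambda>t. G u0 + t", OF dginv[OF s]]) (auto intro!: derivative_eq_intros)
    moreover have "U = (\<lambda>t. ginv (G u0 + t))" by (rule ext) (simp add: U_def)
    ultimately show ?thesis by simp
  qed
  ultimately show ?thesis by blast
qed

lemma growth_lb:
  fixes alphaT r y :: real and phi :: "real \<Rightarrow> real"
  assumes aT: "alphaT > 0" and cont: "continuous_on {0<..} phi"
    and anti: "\<And>x y. 0 < x \<Longrightarrow> x \<le> y \<Longrightarrow> phi y \<le> phi x"
    and r: "r > 0" and pr: "\<And>x. x > 0 \<Longrightarrow> phi x > r"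
  shows "growth_map alphaT phi y \<ge> y + r / alphaT"
proof -
  define P where "P z = (\<exists>X. X 0 = exp (alphaT * y) \<and>
        (\<forall>t\<in>{0..1}. X t > 0 \<and>
           (X has_real_derivative (X t * phi (X t))) (at t within {0..1})) \<and>
        z = ln (X 1) / alphaT)" for z
  define h where "h u = phi (exp u)" for u
  have hc: "continuous_on UNIV h" unfolding h_def
    by (rule continuous_on_compose2[OF cont continuous_on_exp]) auto
  obtain U where U: "U 0 = alphaT * y" "\<forall>t\<in>{0..1}. (U has_real_derivative h (U t)) (at t within {0..1})"
    using ode_exists[OF hc, of r "alphaT * y"] pr r anti by (auto simp: h_def)
  define X where "X t = exp (U t)" for t
  have "P (ln (X 1) / alphaT)" unfolding P_def
  proof (intro exI conjI)
    show "X 0 = exp (alphaT * y)" using U by (simp add: X_def)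
    show "\<forall>t\<in>{0..1}. X t > 0 \<and> (X has_real_derivative (X t * phi (X t))) (at t within {0..1})"
    proof
      fix t :: real assume t: "t \<in> {0..1}"
      have "((\<lambda>t. exp (U t)) has_real_derivative exp (U t) * h (U t)) (at t within {0..1})"
        using U(2) t by (auto intro!: derivative_eq_intros)
      moreover have "(\<lambda>t. exp (U t)) = X" by (rule ext) (simp add: X_def)
      ultimately show "X t > 0 \<and> (X has_real_derivative (X t * phi (X t))) (at t within {0..1})"
        by (simp add: X_def h_def)
    qed
  qed simp
  then have ex: "\<exists>z. P z" by blast
  have un: "z1 = z2" if p1: "P z1" and p2: "P z2" for z1 z2
  proof -
    obtain X1 where X1: "X1 0 = exp (alphaT * y)" "\<forall>t\<in>{0..1}. X1 t > 0 \<and>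
           (X1 has_real_derivative (X1 t * phi (X1 t))) (at t within {0..1})" "z1 = ln (X1 1) / alphaT"
      using p1 unfolding P_def by blast
    obtain X2 where X2: "X2 0 = exp (alphaT * y)" "\<forall>t\<in>{0..1}. X2 t > 0 \<and>
           (X2 has_real_derivative (X2 t * phi (X2 t))) (at t within {0..1})" "z2 = ln (X2 1) / alphaT"
      using p2 unfolding P_def by blast
    have "X1 1 = X2 1" using sol_unique[OF anti pr X1(2) X2(2)] X1(1) X2(1) by simp
    then show ?thesis using X1 X2 by simp
  qed
  have "P (THE z. P z)" using ex un by (metis theI)
  then obtain X where X: "X 0 = exp (alphaT * y)" "\<forall>t\<in>{0..1}. X t > 0 \<and>
           (X has_real_derivative (X t * phi (X t))) (at t within {0..1})"
    "growth_map alphaT phi y = ln (X 1) / alphaT"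
    unfolding P_def growth_map_def by blast
  have "ln (X 1) - ln (X 0) \<ge> r" using sol_props(1)[OF pr X(2)] .
  then have "ln (X 1) \<ge> alphaT * y + r" using X(1) by simp
  then have "ln (X 1) / alphaT \<ge> (alphaT * y + r) / alphaT" using aT by (simp add: divide_right_mono)
  also have "(alphaT * y + r) / alphaT = y + r / alphaT" using aT by (simp add: field_simps)
  finally show ?thesis using X(3) by simp
qed

lemma bed_le:
  fixes abT abO gamma d :: real
  assumes "abT > 0" "abO > 0" "gamma > 0" "d \<ge> 0"
  shows "BED_T abT d \<le> (1 / gamma + abO / (gamma^2 * abT)) * BED_O gamma abO d"
proof -
  have e: "(1 / gamma + abO / (gamma^2 * abT)) * BED_O gamma abO d
      = d + d^2 / abT + gamma * d^2 / abO + abO * d / (gamma * abT)"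
    using assms unfolding BED_O_def by (simp add: field_simps power2_eq_square)
  have "gamma * d^2 / abO \<ge> 0" "abO * d / (gamma * abT) \<ge> 0" using assms by auto
  moreover have "BED_T abT d = d + d^2 / abT" unfolding BED_T_def using assms
    by (simp add: field_simps power2_eq_square)
  ultimately show ?thesis using e by linarith
qed

lemma yplus_lb:
  assumes "\<And>y. F y \<ge> y + delta"
  shows "Yplus F abT Y0 d n \<ge> Y0 + real n * delta - (\<Sum>k\<le>n. BED_T abT (d k))"
proof (induction n)
  case 0 then show ?case by simp
next
  case (Suc n)
  have "F (Yplus F abT Y0 d n) \<ge> Yplus F abT Y0 d n + delta" by (rule assms)
  then show ?case using Suc by (simp add: algebra_simps)
qed

theorem theorem4:
  fixes alphaT betaT abO gamma c X0 r :: real and phi :: "real \<Rightarrow> real"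
  assumes "alphaT > 0" and "betaT > 0" and "abO > 0"
    and "0 < gamma" and "gamma < 1" and "c > 0" and "X0 > 0"
    and "continuous_on {0<..} phi"
    and "\<And>x y. 0 < x \<Longrightarrow> x \<le> y \<Longrightarrow> phi y \<le> phi x"
    and "r > 0" and "\<And>x. x > 0 \<Longrightarrow> phi x > r"
  shows "\<exists>Nstar\<ge>1. \<forall>N\<ge>1.
     optval (growth_map alphaT phi) (alphaT / betaT) (ln X0 / alphaT) gamma abO c Nstar
       \<le> optval (growth_map alphaT phi) (alphaT / betaT) (ln X0 / alphaT) gamma abO c N"
proof -
  define F where "F = growth_map alphaT phi"
  define abT where "abT = alphaT / betaT"
  define Y0 where "Y0 = ln X0 / alphaT"
  define delta where "delta = r / alphaT"
  define K where "K = 1 / gamma + abO / (gamma^2 * abT)"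
  define f where "f N = optval F abT Y0 gamma abO c N" for N
  have abT: "abT > 0" using assms by (simp add: abT_def)
  have dpos: "delta > 0" using assms by (simp add: delta_def)
  have Flb: "F y \<ge> y + delta" for y
    unfolding F_def delta_def using growth_lb[OF assms(1) assms(8) assms(9) assms(10) assms(11)] .
  have L: "f N \<ge> Y0 + real (N - 1) * delta - K * c" if N: "N \<ge> 1" for N
  proof -
    let ?S = "{Yplus F abT Y0 d (N - 1) | d.
            (\<forall>k<N. d k \<ge> 0) \<and> (\<Sum>k<N. BED_O gamma abO (d k)) \<le> c}"
    have "Yplus F abT Y0 (\<lambda>_. 0) (N - 1) \<in> ?S" using assms(6) by (auto simp: BED_O_def)
    then have ne: "?S \<noteq> {}" by blast
    have "Y0 + real (N - 1) * delta - K * c \<le> x" if "x \<in> ?S" for x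
    proof -
      obtain d where d: "x = Yplus F abT Y0 d (N - 1)" "\<forall>k<N. d k \<ge> 0"
        "(\<Sum>k<N. BED_O gamma abO (d k)) \<le> c" using \<open>x \<in> ?S\<close> by blast
      have iv: "{..N - 1} = {..<N}" using N by auto
      have "(\<Sum>k\<le>N - 1. BED_T abT (d k)) = (\<Sum>k<N. BED_T abT (d k))" using iv by simp
      also have "\<dots> \<le> (\<Sum>k<N. K * BED_O gamma abO (d k))"
        by (rule sum_mono) (use bed_le[OF abT assms(3) assms(4)] d(2) in \<open>auto simp: K_def\<close>)
      also have "\<dots> = K * (\<Sum>k<N. BED_O gamma abO (d k))" by (simp add: sum_distrib_left)
      also have "\<dots> \<le> K * c"
        using d(3) abT assms(3) assms(4) by (intro mult_left_mono) (auto simp: K_def)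
      finally have "(\<Sum>k\<le>N - 1. BED_T abT (d k)) \<le> K * c" .
      moreover have "Yplus F abT Y0 d (N - 1) \<ge> Y0 + real (N - 1) * delta - (\<Sum>k\<le>N - 1. BED_T abT (d k))"
        by (rule yplus_lb[OF Flb])
      ultimately show ?thesis using d(1) by linarith
    qed
    then have "Y0 + real (N - 1) * delta - K * c \<le> Inf ?S" using ne by (intro cInf_greatest) auto
    then show ?thesis by (simp add: f_def optval_def)
  qed
  obtain M :: nat where M: "(f 1 - Y0 + K * c) / delta < real M" using reals_Archimedean2 by blast
  then have M': "Y0 + real M * delta - K * c > f 1" using dpos by (simp add: field_simps)
  define S where "S = {1..M+1}"
  have fin: "finite (f ` S)" and nes: "f ` S \<noteq> {}" by (auto simp: S_def)
  obtain Ns where Ns: "Ns \<in> S" "f Ns = Min (f ` S)" using Min_in[OF fin nes] by auto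
  have minS: "f Ns \<le> f N" if "N \<in> S" for N using Ns fin that by simp
  have "\<forall>N\<ge>1. f Ns \<le> f N"
  proof (intro allI impI)
    fix N :: nat assume N: "N \<ge> 1"
    show "f Ns \<le> f N"
    proof (cases "N \<le> M + 1")
      case True then show ?thesis using minS N by (simp add: S_def)
    next
      case False
      then have "real (N - 1) \<ge> real M" by simp
      then have "real (N - 1) * delta \<ge> real M * delta" using dpos by (simp add: mult_right_mono)
      then have "f N > f 1" using L[OF N] M' by linarith
      moreover have "f Ns \<le> f 1" using minS by (simp add: S_def)
      ultimately show ?thesis by simp
    qed
  qed
  moreover have "Ns \<ge> 1" using Ns by (simp add: S_def)
  ultimately show ?thesis unfolding f_def F_def abT_def Y0_def by blast
qed

end
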